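(* Let $1\le k<\frac n2$, $\theta\in\mathbb{R}$ and $\gamma\in\mathbb{R}^n$ with $\|\gamma\|_0\le k$. Then $\theta$ is the unique minimizer over $\mu\in\mathbb{R}$ of $$\mu\mapsto \sup_{\omega\in\mathbb{R}}\ \inf_{\zeta\in\mathbb{C},\,|\zeta|\le 1}\left|E_{\theta,\gamma}\Big(\frac1n\sum_{j=1}^n e^{i\omega(X_j-\mu)+\frac{\omega^2}{2}}\Big)-\frac{n-k}{n}-\frac kn\zeta\right| .$$
   Context: Model: for an integer $n\ge 2$, observations $X_j=\theta+\gamma_j+\sigma Z_j$, $j=1,\dots,n$, where $\theta\in\mathbb{R}$, $\gamma=(\gamma_1,\dots,\gamma_n)\in\mathbb{R}^n$, $\sigma>0$, and $Z_1,\dots,Z_n$ are i.i.d. $N(0,1)$. $P_{\theta,\gamma,\sigma}$ denotes the joint law of $(X_1,\dots,X_n)$ and $E_{\theta,\gamma,\sigma}$ its expectation; $P_{\theta,\gamma}$ and $E_{\theta,\gamma}$ denote the case $\sigma=1$. $\|\gamma\|_0=\#\{j:\gamma_j\neq 0\}$. *)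

theory Defs
  imports "HOL-Probability.Probability"
begin

text \<open>Coordinates are indexed by j in {..<n} (0-based) instead of 1..n.
  P_law n theta gamma sigma is the joint law of (X_j)_{j<n}, X_j = theta + gamma_j + sigma Z_j,
  Z_j iid N(0,1): the product of the normal laws N(theta + gamma_j, sigma^2).\<close>

definition P_law :: "nat \<Rightarrow> real \<Rightarrow> (nat \<Rightarrow> real) \<Rightarrow> real \<Rightarrow> (nat \<Rightarrow> real) measure" where
  "P_law n \<theta> \<gamma> \<sigma> = PiM {..<n} (\<lambda>j. density lborel (normal_density (\<theta> + \<gamma> j) \<sigma>))"

definition E_law :: "nat \<Rightarrow> real \<Rightarrow> (nat \<Rightarrow> real) \<Rightarrow> ((nat \<Rightarrow> real) \<Rightarrow> complex) \<Rightarrow> complex" where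
  "E_law n \<theta> \<gamma> f = integral\<^sup>L (P_law n \<theta> \<gamma> 1) f"

definition l0_norm :: "nat \<Rightarrow> (nat \<Rightarrow> real) \<Rightarrow> nat" where
  "l0_norm n \<gamma> = card {j \<in> {..<n}. \<gamma> j \<noteq> 0}"

definition crit :: "nat \<Rightarrow> nat \<Rightarrow> real \<Rightarrow> (nat \<Rightarrow> real) \<Rightarrow> real \<Rightarrow> real" where
  "crit n k \<theta> \<gamma> \<mu> =
     (SUP \<omega>::real. INF \<zeta> \<in> {z::complex. cmod z \<le> 1}.
        cmod (E_law n \<theta> \<gamma> (\<lambda>x. (1 / of_nat n) * (\<Sum>j<n.
                 exp (\<i> * complex_of_real (\<omega> * (x j - \<mu>)) + complex_of_real (\<omega>\<^sup>2 / 2))))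
              - complex_of_real (real (n - k) / real n)
              - complex_of_real (real k / real n) * \<zeta>))"

end

theory Submission imports Defs begin

lemma char_normal1:
  "(CLINT x | density lborel (normal_density m 1). iexp (t*x)) = iexp (t*m) * complex_of_real (exp(-(t^2)/2))"
proof -
  have "(CLINT x | density lborel (normal_density m 1). iexp (t*x))
      = (CLINT x | lborel. normal_density m 1 x *\<^sub>R iexp (t*x))"
    by (subst integral_density) (auto simp: normal_density_nonneg)
  also have "\<dots> = (CLINT y | lborel. normal_density m 1 (m + 1*y) *\<^sub>R iexp (t*(m+1*y)))"
    by (subst lborel_integral_real_affine[of 1 _ m]) simp_all
  also have "\<dots> = (CLINT y | lborel. iexp (t*m) * (std_normal_density y *\<^sub>R iexp (t*y)))"
    by (rule Bochner_Integration.integral_cong) (auto simp: normal_density_def distrib_left exp_add scaleR_conv_of_real algebra_simps)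
  also have "\<dots> = iexp (t*m) * (CLINT y | lborel. std_normal_density y *\<^sub>R iexp (t*y))"
    by (rule integral_mult_right_zero)
  also have "(CLINT y | lborel. std_normal_density y *\<^sub>R iexp (t*y)) = char std_normal_distribution t"
    unfolding char_def
    by (subst integral_density) (auto simp: normal_density_nonneg)
  finally show ?thesis by (simp add: char_std_normal_distribution)
qed

lemma integral_normal_term:
  "(CLINT y | density lborel (normal_density m 1). exp (\<i> * complex_of_real (\<omega> * (y - \<mu>)) + complex_of_real (\<omega>\<^sup>2 / 2)))
   = exp (\<i> * complex_of_real (\<omega> * (m - \<mu>)))"
proof -
  have "(CLINT y | density lborel (normal_density m 1). exp (\<i> * complex_of_real (\<omega> * (y - \<mu>)) + complex_of_real (\<omega>\<^sup>2 / 2)))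
     = (CLINT y | density lborel (normal_density m 1). exp (- \<i> * complex_of_real (\<omega> * \<mu>) + complex_of_real (\<omega>\<^sup>2 / 2)) * iexp (\<omega> * y))"
    by (rule Bochner_Integration.integral_cong) (auto simp: exp_add[symmetric] algebra_simps)
  also have "\<dots> = exp (- \<i> * complex_of_real (\<omega> * \<mu>) + complex_of_real (\<omega>\<^sup>2 / 2)) * (CLINT y | density lborel (normal_density m 1). iexp (\<omega> * y))"
    by (rule integral_mult_right_zero)
  also have "\<dots> = exp (- \<i> * complex_of_real (\<omega> * \<mu>) + complex_of_real (\<omega>\<^sup>2 / 2)) * (iexp (\<omega>*m) * exp (complex_of_real (-(\<omega>^2)/2)))"
    by (subst char_normal1, subst exp_of_real, rule refl)
  also have "\<dots> = exp (- \<i> * complex_of_real (\<omega> * \<mu>) + complex_of_real (\<omega>\<^sup>2 / 2) + (\<i> * complex_of_real (\<omega>*m) + complex_of_real (-(\<omega>^2)/2)))"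
    by (simp only: exp_add)
  also have "\<dots> = exp (\<i> * complex_of_real (\<omega> * (m - \<mu>)))"
    by (rule arg_cong[where f=exp]) (simp add: algebra_simps)
  finally show ?thesis .
qed

lemma E_eq:
  "E_law n \<theta> \<gamma> (\<lambda>x. (1 / of_nat n) * (\<Sum>j<n.
       exp (\<i> * complex_of_real (\<omega> * (x j - \<mu>)) + complex_of_real (\<omega>\<^sup>2 / 2))))
   = (1 / of_nat n) * (\<Sum>j<n. exp (\<i> * complex_of_real (\<omega> * (\<theta> + \<gamma> j - \<mu>))))"
proof -
  define M where "M = (\<lambda>j. density lborel (normal_density (\<theta> + \<gamma> j) 1))"
  have P: "prob_space (M j)" for j unfolding M_def by (rule prob_space_normal_density) simp
  define g where "g = (\<lambda>y::real. exp (\<i> * complex_of_real (\<omega> * (y - \<mu>)) + complex_of_real (\<omega>\<^sup>2 / 2)))"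
  have gm[measurable]: "g \<in> borel_measurable borel" unfolding g_def by measurable
  interpret pp: prob_space "PiM {..<n} M" by (rule prob_space_PiM) (simp add: P)
  have int: "integrable (PiM {..<n} M) (\<lambda>x. g (x j))" if "j < n" for j
  proof (rule pp.integrable_const_bound[where B="exp (\<omega>\<^sup>2 / 2)"])
    show "AE x in PiM {..<n} M. norm (g (x j)) \<le> exp (\<omega>\<^sup>2 / 2)"
      by (simp add: g_def norm_exp)
    show "(\<lambda>x. g (x j)) \<in> borel_measurable (PiM {..<n} M)"
      using that by (auto simp: M_def)
  qed
  have comp: "integral\<^sup>L (PiM {..<n} M) (\<lambda>x. g (x j)) = integral\<^sup>L (M j) g" if "j < n" for j
  proof -
    have "integral\<^sup>L (M j) g = integral\<^sup>L (distr (PiM {..<n} M) (M j) (\<lambda>x. x j)) g"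
      using that by (subst distr_PiM_component) (auto simp: P)
    also have "\<dots> = integral\<^sup>L (PiM {..<n} M) (\<lambda>x. g (x j))"
      using that by (subst integral_distr) (auto simp: M_def)
    finally show ?thesis by simp
  qed
  have "E_law n \<theta> \<gamma> (\<lambda>x. (1 / of_nat n) * (\<Sum>j<n. g (x j)))
      = (1 / of_nat n) * (\<Sum>j<n. integral\<^sup>L (PiM {..<n} M) (\<lambda>x. g (x j)))"
    unfolding E_law_def P_law_def M_def[symmetric]
  proof -
    have "integral\<^sup>L (PiM {..<n} M) (\<lambda>x. \<Sum>j<n. g (x j)) = (\<Sum>j<n. integral\<^sup>L (PiM {..<n} M) (\<lambda>x. g (x j)))"
      by (rule Bochner_Integration.integral_sum) (auto intro: int)
    then show "integral\<^sup>L (PiM {..<n} M) (\<lambda>x. (1 / of_nat n) * (\<Sum>j<n. g (x j))) = (1 / of_nat n) * (\<Sum>j<n. integral\<^sup>L (PiM {..<n} M) (\<lambda>x. g (x j)))"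
      by simp
  qed
  also have "\<dots> = (1 / of_nat n) * (\<Sum>j<n. exp (\<i> * complex_of_real (\<omega> * (\<theta> + \<gamma> j - \<mu>))))"
  proof (intro arg_cong[where f="\<lambda>s. (1 / of_nat n) * s"] sum.cong refl)
    fix j assume "j \<in> {..<n}"
    then have "integral\<^sup>L (PiM {..<n} M) (\<lambda>x. g (x j)) = integral\<^sup>L (M j) g" by (simp add: comp)
    also have "\<dots> = exp (\<i> * complex_of_real (\<omega> * (\<theta> + \<gamma> j - \<mu>)))"
      unfolding M_def g_def by (rule integral_normal_term)
    finally show "integral\<^sup>L (PiM {..<n} M) (\<lambda>x. g (x j)) = exp (\<i> * complex_of_real (\<omega> * (\<theta> + \<gamma> j - \<mu>)))" .
  qed
  finally show ?thesis unfolding g_def .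
qed

theorem mainTheorem1:
  fixes n k :: nat and \<theta> :: real and \<gamma> :: "nat \<Rightarrow> real"
  assumes "n \<ge> 2" and "1 \<le> k" and "real k < real n / 2"
    and "l0_norm n \<gamma> \<le> k"
  shows "(\<forall>\<mu>. crit n k \<theta> \<gamma> \<theta> \<le> crit n k \<theta> \<gamma> \<mu>)
       \<and> (\<forall>\<mu>. crit n k \<theta> \<gamma> \<mu> \<le> crit n k \<theta> \<gamma> \<theta> \<longrightarrow> \<mu> = \<theta>)"
proof -
  define A where "A = (\<lambda>\<mu> \<omega>. (1 / of_nat n) * (\<Sum>j<n. exp (\<i> * complex_of_real (\<omega> * (\<theta> + \<gamma> j - \<mu>)))))"
  define c where "c = complex_of_real (real (n - k) / real n)"
  define b where "b = complex_of_real (real k / real n)"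
  define D where "D = {z::complex. cmod z \<le> 1}"
  define F where "F = (\<lambda>\<mu> \<omega>. INF \<zeta>\<in>D. cmod (A \<mu> \<omega> - c - b * \<zeta>))"
  have crit_eq: "crit n k \<theta> \<gamma> \<mu> = (SUP \<omega>. F \<mu> \<omega>)" for \<mu>
    unfolding crit_def E_eq F_def A_def c_def b_def D_def by simp
  have n0: "real n > 0" using assms(1) by simp
  have kn: "k \<le> n" using assms(3) by simp
  have D0: "0 \<in> D" unfolding D_def by simp
  have F_nonneg: "F \<mu> \<omega> \<ge> 0" for \<mu> \<omega>
    unfolding F_def using D0 by (intro cINF_greatest) auto
  have bddb: "bdd_below ((\<lambda>\<zeta>. cmod (A \<mu> \<omega> - c - b * \<zeta>)) ` D)" for \<mu> \<omega>
    by (rule bdd_belowI[where m=0]) auto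
  have Anorm: "cmod (A \<mu> \<omega>) \<le> 1" for \<mu> \<omega>
  proof -
    have "cmod (\<Sum>j<n. exp (\<i> * complex_of_real (\<omega> * (\<theta> + \<gamma> j - \<mu>)))) \<le> (\<Sum>j<n. cmod (exp (\<i> * complex_of_real (\<omega> * (\<theta> + \<gamma> j - \<mu>)))))"
      by (rule norm_sum)
    also have "\<dots> = real n" by (simp add: norm_exp)
    finally show ?thesis unfolding A_def using n0 by (simp add: norm_mult norm_divide)
  qed
  have cnorm: "cmod c \<le> 1" unfolding c_def norm_of_real using n0 kn by (simp add: abs_of_nonneg)
  have F_le: "F \<mu> \<omega> \<le> 2" for \<mu> \<omega>
  proof -
    have "F \<mu> \<omega> \<le> cmod (A \<mu> \<omega> - c - b * 0)"
      unfolding F_def by (rule cINF_lower[OF bddb D0])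
    also have "\<dots> \<le> cmod (A \<mu> \<omega>) + cmod c" by (simp add: norm_triangle_ineq4)
    finally show ?thesis using Anorm[of \<mu> \<omega>] cnorm by simp
  qed
  have bdda: "bdd_above (range (F \<mu>))" for \<mu>
    by (rule bdd_aboveI[where M=2]) (auto intro: F_le)
  have crit_nonneg: "crit n k \<theta> \<gamma> \<mu> \<ge> 0" for \<mu>
    unfolding crit_eq by (rule cSUP_upper2[OF bdda, of 0]) (auto intro: F_nonneg)
  define S where "S = {j \<in> {..<n}. \<gamma> j \<noteq> 0}"
  define Z where "Z = {..<n} - S"
  have SZ: "S \<subseteq> {..<n}" "finite S" "finite Z" unfolding S_def Z_def by auto
  have cS: "card S \<le> k" using assms(4) unfolding S_def l0_norm_def by simp
  have cZ: "card Z = n - card S" unfolding Z_def using SZ by (simp add: card_Diff_subset)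
  have gZ: "\<gamma> j = 0" if "j \<in> Z" for j using that unfolding Z_def S_def by auto
  have split: "(\<Sum>j<n. f j) = (\<Sum>j\<in>Z. f j) + (\<Sum>j\<in>S. f j)" for f :: "nat \<Rightarrow> 'a::comm_monoid_add"
    unfolding Z_def using SZ by (simp add: sum.subset_diff[of S "{..<n}"])
  have F\<theta>: "F \<theta> \<omega> = 0" for \<omega>
  proof -
    define e where "e = (\<lambda>j. exp (\<i> * complex_of_real (\<omega> * (\<theta> + \<gamma> j - \<theta>))))"
    have eZ: "(\<Sum>j\<in>Z. e j) = of_nat (card Z)" using gZ unfolding e_def by simp
    have "cmod (\<Sum>j\<in>S. e j) \<le> (\<Sum>j\<in>S. cmod (e j))" by (rule norm_sum)
    also have "\<dots> = real (card S)" unfolding e_def by (simp add: norm_exp)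
    finally have eS: "cmod (\<Sum>j\<in>S. e j) \<le> real (card S)" .
    have "A \<theta> \<omega> - c = (1 / of_nat n) * ((\<Sum>j\<in>S. e j) + of_nat (k - card S))"
      unfolding A_def c_def e_def[symmetric] split[of e] eZ cZ using n0 cS kn
      by (simp add: field_simps of_nat_diff)
    then have "cmod (A \<theta> \<omega> - c) \<le> (1 / real n) * (real (card S) + real (k - card S))"
      using n0 eS by (simp add: norm_mult norm_divide divide_right_mono norm_triangle_le)
    also have "\<dots> = real k / real n" using cS by simp
    finally have Ac: "cmod (A \<theta> \<omega> - c) \<le> real k / real n" .
    define z where "z = (A \<theta> \<omega> - c) / b"
    have bnz: "b \<noteq> 0" unfolding b_def using assms(2) n0 by simp
    have zD: "z \<in> D" unfolding D_def z_def b_def using Ac assms(2) n0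
      by (simp add: norm_mult norm_divide pos_le_divide_eq pos_divide_le_eq)
    have "F \<theta> \<omega> \<le> cmod (A \<theta> \<omega> - c - b * z)" unfolding F_def by (rule cINF_lower[OF bddb zD])
    also have "\<dots> = 0" unfolding z_def using bnz by simp
    finally show ?thesis using F_nonneg[of \<theta> \<omega>] by simp
  qed
  have crit\<theta>: "crit n k \<theta> \<gamma> \<theta> = 0" unfolding crit_eq F\<theta> by simp
  have pos: "crit n k \<theta> \<gamma> \<mu> > 0" if "\<mu> \<noteq> \<theta>" for \<mu>
  proof -
    define \<omega> where "\<omega> = pi / (\<theta> - \<mu>)"
    have d: "\<theta> - \<mu> \<noteq> 0" using that by simp
    define f where "f = (\<lambda>j. cos (\<omega> * (\<theta> + \<gamma> j - \<mu>)))"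
    have fZ: "f j = -1" if "j \<in> Z" for j using gZ[OF that] d unfolding f_def \<omega>_def by simp
    have "(\<Sum>j\<in>S. f j) \<le> (\<Sum>j\<in>S. 1)" unfolding f_def by (rule sum_mono) simp
    then have fsum: "(\<Sum>j<n. f j) \<le> - real (card Z) + real (card S)" using fZ by (simp add: split[of f])
    have ReA: "Re (A \<mu> \<omega>) = (1 / real n) * (\<Sum>j<n. f j)"
      unfolding A_def f_def by (simp add: Re_exp Re_sum)
    have "real (card Z) = real n - real (card S)" using cZ SZ card_mono[of "{..<n}" S] by simp
    then have ReA2: "Re (A \<mu> \<omega>) \<le> (2 * real k - real n) / real n"
      using ReA fsum cS n0 by (simp add: divide_right_mono field_simps)
    have "F \<mu> \<omega> \<ge> (real n - 2 * real k) / real n + (real n - 2 * real k) / real n"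
      unfolding F_def
    proof (rule cINF_greatest)
      show "D \<noteq> {}" using D0 by auto
      fix \<zeta> assume "\<zeta> \<in> D"
      then have "cmod \<zeta> \<le> 1" unfolding D_def by simp
      then have "Re \<zeta> \<ge> -1" using abs_Re_le_cmod[of \<zeta>] abs_le_iff[of "Re \<zeta>"] by linarith
      then have "(real k / real n) * (-1) \<le> (real k / real n) * Re \<zeta>"
        by (rule mult_left_mono) simp
      moreover have "Re (b * \<zeta>) = (real k / real n) * Re \<zeta>" unfolding b_def by simp
      ultimately have "Re (b * \<zeta>) \<ge> - (real k / real n)" by simp
      then have "- Re (A \<mu> \<omega> - c - b * \<zeta>) \<ge> (real n - 2 * real k) / real n + (real n - 2 * real k) / real n"
      proof -
        have e0: "Re (A \<mu> \<omega> - c - b * \<zeta>) = Re (A \<mu> \<omega>) - (real n - real k) / real n - Re (b * \<zeta>)"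
          unfolding c_def using kn by (simp add: of_nat_diff)
        have e1: "(real n - real k)/real n - real k/real n = (real n - 2*real k)/real n"
          by (simp add: diff_divide_distrib)
        have e2: "(2 * real k - real n) / real n = - ((real n - 2*real k)/real n)"
          by (simp add: divide_simps)
        show ?thesis using e0 e1 e2 ReA2 \<open>Re (b * \<zeta>) \<ge> - (real k / real n)\<close> by linarith
      qed
      also have "- Re (A \<mu> \<omega> - c - b * \<zeta>) \<le> cmod (A \<mu> \<omega> - c - b * \<zeta>)"
        using abs_Re_le_cmod[of "A \<mu> \<omega> - c - b * \<zeta>"] by linarith
      finally show "(real n - 2 * real k) / real n + (real n - 2 * real k) / real n \<le> cmod (A \<mu> \<omega> - c - b * \<zeta>)" .
    qed
    moreover have "(real n - 2 * real k) / real n > 0" using assms(3) n0 by simp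
    ultimately have "F \<mu> \<omega> > 0" by linarith
    moreover have "F \<mu> \<omega> \<le> (SUP \<omega>. F \<mu> \<omega>)" by (rule cSUP_upper[OF UNIV_I bdda])
    ultimately show ?thesis unfolding crit_eq by linarith
  qed
  show ?thesis using crit_nonneg crit\<theta> pos by force
qed

end
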